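(* Assume the standing assumptions and, in addition, that $f$ is $\rho$-strongly convex for some $\rho>0$. Suppose $(D)$ has an optimal solution $p^*$ (a minimizer of $\theta$) with $\|p^*\|\le R$, $R>0$. Let $\kappa>0$ and let $(p_k)_{k\ge0}$ be generated by the fast gradient method applied to $\theta_\kappa$. Then for all $k\ge0$, $$\theta(p_k)-\theta(p^* )\le\frac\kappa2R^2+\frac{25}{8}\bigl(\theta(0)-\theta(p^* )\bigr)e^{-\frac k2\sqrt{\kappa/L(\kappa)}},$$ $$\|\nabla\theta(p_k)\|\le 2\sqrt{L(\kappa)\bigl(\theta(0)-\theta(p^* )\bigr)}\,e^{-\frac k2\sqrt{\kappa/L(\kappa)}}+2\kappa R .$$
   Context: Standing assumptions: $\mathcal{H}$ is a real Hilbert space; $f:\mathcal{H}\to\mathbb{R}\cup\{+\infty\}$ is proper, convex, lower semicontinuous with bounded effective domain; $g:\mathbb{R}^m\to\mathbb{R}\cup\{+\infty\}$ is proper, lower semicontinuous and $\mu$-strongly convex for some $\mu>0$; $A:\mathcal{H}\to\mathbb{R}^m$ is linear and continuous with $A(\operatorname{dom} f)\cap\operatorname{dom} g\neq\emptyset$. $(D)$ is $\sup_p\{-f^*(A^*p)-g^*(-p)\}$. $\theta(p):=f^*(A^*p)+g^*(-p)$ (differentiable here). $\theta_\kappa(p):=\theta(p)+\frac\kappa2\|p\|^2$, and $L(\kappa):=\frac{\|A\|^2}{\rho}+\frac1\mu+\kappa$ (a Lipschitz constant of $\nabla\theta_\kappa$). Fast gradient method on $\theta_\kappa$: $w_0=p_0=0$,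 $p_{k+1}=w_k-\frac{1}{L(\kappa)}\nabla\theta_\kappa(w_k)$, $w_{k+1}=p_{k+1}+\frac{\sqrt{L(\kappa)}-\sqrt\kappa}{\sqrt{L(\kappa)}+\sqrt\kappa}(p_{k+1}-p_k)$. *)

theory Defs
  imports "HOL-Analysis.Analysis"
begin

text \<open>Extended-real-valued functions \<open>'a \<Rightarrow> ereal\<close> model \<open>\<real> \<union> {+\<infinity>}\<close>; properness excludes \<open>-\<infinity>\<close>.\<close>

definition proper_fun :: "('a \<Rightarrow> ereal) \<Rightarrow> bool" where
  "proper_fun f \<longleftrightarrow> (\<forall>x. f x \<noteq> -\<infinity>) \<and> (\<exists>x. f x \<noteq> \<infinity>)"

definition edom :: "('a \<Rightarrow> ereal) \<Rightarrow> 'a set" where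
  "edom f = {x. f x \<noteq> \<infinity>}"

definition convex_fun :: "('a::real_vector \<Rightarrow> ereal) \<Rightarrow> bool" where
  "convex_fun f \<longleftrightarrow> (\<forall>x y t. 0 < t \<and> t < 1 \<longrightarrow>
      f (t *\<^sub>R x + (1 - t) *\<^sub>R y) \<le> ereal t * f x + ereal (1 - t) * f y)"

definition strongly_convex_fun :: "real \<Rightarrow> ('a::real_normed_vector \<Rightarrow> ereal) \<Rightarrow> bool" where
  "strongly_convex_fun c f \<longleftrightarrow> (\<forall>x y t. 0 < t \<and> t < 1 \<longrightarrow>
      f (t *\<^sub>R x + (1 - t) *\<^sub>R y) \<le> ereal t * f x + ereal (1 - t) * f y
        - ereal (c / 2 * t * (1 - t) * (norm (x - y))\<^sup>2))"

definition lsc_fun :: "('a::topological_space \<Rightarrow> ereal) \<Rightarrow> bool" where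
  "lsc_fun f \<longleftrightarrow> (\<forall>c. closed {x. f x \<le> c})"

definition fconj :: "('a::real_inner \<Rightarrow> ereal) \<Rightarrow> 'a \<Rightarrow> ereal" where
  "fconj f y = (SUP x. ereal (inner y x) - f x)"

definition grad :: "('a::real_inner \<Rightarrow> real) \<Rightarrow> 'a \<Rightarrow> 'a" where
  "grad F p = (SOME v. (F has_derivative (\<lambda>h. inner v h)) (at p))"

text \<open>Fast gradient method: returns the pair \<open>(p_k, w_k)\<close> for the gradient map \<open>G\<close>,
  step constant \<open>L\<close> and strong-convexity parameter \<open>\<kappa>\<close>.\<close>
fun fgm :: "('b::real_vector \<Rightarrow> 'b) \<Rightarrow> real \<Rightarrow> real \<Rightarrow> nat \<Rightarrow> 'b \<times> 'b" where
  "fgm G L \<kappa> 0 = (0, 0)"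
| "fgm G L \<kappa> (Suc k) =
     (let p = fst (fgm G L \<kappa> k); w = snd (fgm G L \<kappa> k);
          p' = w - (1 / L) *\<^sub>R G w
      in (p', p' + ((sqrt L - sqrt \<kappa>) / (sqrt L + sqrt \<kappa>)) *\<^sub>R (p' - p)))"

end

theory Submission
  imports Defs
begin

lemma small_le0:
  fixes a K :: real
  assumes "\<And>t. 0 < t \<Longrightarrow> t < 1 \<Longrightarrow> a \<le> K * t"
  shows "a \<le> 0"
proof (rule ccontr)
  assume "\<not> a \<le> 0"
  hence a: "a > 0" by simp
  define t where "t = min (1/2) (a / (2 * (\<bar>K\<bar> + 1)))"
  have t0: "t > 0" using a by (simp add: t_def)
  have t1: "t < 1" by (simp add: t_def)
  have "K * t \<le> \<bar>K\<bar> * t" using t0 by (simp add: abs_ge_self mult_right_mono)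
  also have "\<dots> \<le> (\<bar>K\<bar> + 1) * t" using t0 by (simp add: mult_right_mono)
  also have "\<dots> \<le> (\<bar>K\<bar> + 1) * (a / (2 * (\<bar>K\<bar> + 1)))"
    by (rule mult_left_mono) (auto simp: t_def)
  also have "\<dots> = a / 2" by (simp add: field_simps)
  finally have "K * t < a" using a by simp
  with assms[OF t0 t1] show False by simp
qed

lemma aux8: fixes c X Y :: real assumes "c / 8 * X \<le> Y / 2" "c > 0" shows "X \<le> 4 / c * Y"
proof -
  have "X = (8 / c) * (c / 8 * X)" using assms by simp
  also have "\<dots> \<le> (8/c) * (Y / 2)" using assms by (intro mult_left_mono) auto
  finally show ?thesis by simp
qed

lemma max_exists:
  fixes D :: "'c::{real_inner, complete_space} set" and H :: "'c \<Rightarrow> real"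
  assumes ne: "D \<noteq> {}" and c: "c > 0"
    and mid: "\<And>x y. x \<in> D \<Longrightarrow> y \<in> D \<Longrightarrow> (1/2) *\<^sub>R (x + y) \<in> D \<and>
          H ((1/2) *\<^sub>R (x + y)) \<le> (H x + H y) / 2 - c / 8 * (norm (x - y))\<^sup>2"
    and lsc: "\<And>r. closed {x \<in> D. H x \<le> r}"
    and bdd: "\<And>z. z \<in> D \<Longrightarrow> inner y z - H z \<le> B"
  shows "\<exists>x\<in>D. \<forall>z\<in>D. inner y z - H z \<le> inner y x - H x"
proof -
  define \<psi> where "\<psi> z = inner y z - H z" for z
  define s where "s = Sup (\<psi> ` D)"
  have bddA: "bdd_above (\<psi> ` D)" using bdd by (auto simp: \<psi>_def bdd_above_def)
  have ub: "\<psi> z \<le> s" if "z \<in> D" for z using that bddA by (simp add: s_def cSup_upper)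
  have "\<exists>z\<in>D. s - 1 / (real n + 1) < \<psi> z" for n :: nat
  proof -
    have "s - 1 / (real n + 1) < s" by simp
    then show ?thesis unfolding s_def using ne by (subst (asm) less_cSup_iff) (auto simp: bddA)
  qed
  then obtain z where zD: "\<And>n. z n \<in> D" and zs: "\<And>n. s - 1 / (real n + 1) < \<psi> (z n)"
    by metis
  have dist: "(norm (z n - z m))\<^sup>2 \<le> 4 / c * (1 / (real n + 1) + 1 / (real m + 1))" for n m
  proof -
    define K where "K = c / 8 * (norm (z n - z m))\<^sup>2"
    define P where "P = (1/2) *\<^sub>R (z n + z m)"
    have m1: "H P \<le> (H (z n) + H (z m)) / 2 - K"
      and m2: "P \<in> D" using mid[OF zD zD] by (auto simp: K_def P_def)
    have "\<psi> P \<le> s" using ub[OF m2] .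
    moreover have "inner y P = (inner y (z n) + inner y (z m)) / 2"
      by (simp add: inner_add_right P_def)
    ultimately have "(\<psi> (z n) + \<psi> (z m)) / 2 + K \<le> s"
      using m1 unfolding \<psi>_def by argo
    hence "(\<psi> (z n) + \<psi> (z m)) / 2 + c / 8 * (norm (z n - z m))\<^sup>2 \<le> s" by (simp add: K_def)
    with zs[of n] zs[of m] have "c / 8 * (norm (z n - z m))\<^sup>2 \<le> (1 / (real n + 1) + 1 / (real m + 1)) / 2"
      by argo
    then show ?thesis using c by (rule aux8)
  qed
  have "Cauchy z"
  proof (rule metric_CauchyI)
    fix e :: real assume e: "e > 0"
    obtain M :: nat where M: "8 / (c * e\<^sup>2) < real M" using reals_Archimedean2 by blast
    show "\<exists>M. \<forall>m\<ge>M. \<forall>n\<ge>M. dist (z m) (z n) < e"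
    proof (intro exI allI impI)
      fix m n assume mM: "m \<ge> M" and nM: "n \<ge> M"
      have "1 / (real m + 1) \<le> 1 / (real M + 1)" "1 / (real n + 1) \<le> 1 / (real M + 1)"
        using mM nM by (auto simp: frac_le)
      hence "(norm (z m - z n))\<^sup>2 \<le> 4 / c * (2 / (real M + 1))"
      proof -
        have "4 / c * (1 / (real m + 1) + 1 / (real n + 1)) \<le> 4 / c * (2 / (real M + 1))"
          using \<open>1 / (real m + 1) \<le> 1 / (real M + 1)\<close> \<open>1 / (real n + 1) \<le> 1 / (real M + 1)\<close> c
          by (intro mult_left_mono) auto
        thus ?thesis using dist[of m n] by linarith
      qed
      also have "\<dots> < e\<^sup>2"
      proof -
        have "8 / (c * e\<^sup>2) < real M + 1" using M by simp
        hence "8 < (real M + 1) * (c * e\<^sup>2)" using c e by (simp add: field_simps)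
        have cM: "c * (real M + 1) > 0" using c by simp
        have "4 / c * (2 / (real M + 1)) = 8 / (c * (real M + 1))" by simp
        also have "\<dots> < e\<^sup>2" using cM \<open>8 < _\<close> by (simp add: pos_divide_less_eq mult_ac)
        finally show ?thesis .
      qed
      finally have "(norm (z m - z n))\<^sup>2 < e\<^sup>2" .
      thus "dist (z m) (z n) < e" using e by (simp add: dist_norm power_less_imp_less_base)
    qed
  qed
  then obtain x where zx: "z \<longlonglongrightarrow> x" using Cauchy_convergent_iff convergent_def by blast
  have key: "x \<in> D \<and> H x \<le> inner y x - s + e" if e: "e > 0" for e
  proof -
    have lim: "(\<lambda>n. inner y (z n)) \<longlonglongrightarrow> inner y x" using zx by (intro tendsto_intros)
    have ev1: "eventually (\<lambda>n. inner y (z n) < inner y x + e / 2) sequentially"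
      using order_tendstoD(2)[OF lim, of "inner y x + e / 2"] e by simp
    have "eventually (\<lambda>n. 1 / (real n + 1) < e / 2) sequentially"
    proof -
      obtain N :: nat where "2 / e < real N" using reals_Archimedean2 by blast
      hence "\<forall>n\<ge>N. 1 / (real n + 1) < e / 2"
      proof (intro allI impI)
        fix n assume "2 / e < real N" "N \<le> n"
        hence "2 / e < real n + 1" by linarith
        thus "1 / (real n + 1) < e / 2" using e by (simp add: field_simps)
      qed
      thus ?thesis by (auto simp: eventually_sequentially)
    qed
    with ev1 have "eventually (\<lambda>n. z n \<in> {w \<in> D. H w \<le> inner y x - s + e}) sequentially"
    proof eventually_elim
      case (elim n)
      hence a: "inner y (z n) < inner y x + e/2" "1/(real n+1) < e/2" by auto
      have b: "H (z n) < inner y (z n) - s + 1/(real n+1)" using zs[of n] by (simp add: \<psi>_def)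
      have "H (z n) \<le> inner y x - s + e" using a b by argo
      thus ?case using zD[of n] by simp
    qed
    from Lim_in_closed_set[OF lsc this _ zx] show ?thesis by simp
  qed
  have xD: "x \<in> D" using key[of 1] by simp
  have "s \<le> \<psi> x"
  proof -
    have "\<And>e. e > 0 \<Longrightarrow> s \<le> \<psi> x + e" using key by (fastforce simp: \<psi>_def)
    thus ?thesis by (meson field_le_epsilon)
  qed
  with ub xD show ?thesis unfolding \<psi>_def by (metis order_trans)
qed

lemma norm_diff_scale_sq:
  fixes a b :: "'c::real_inner"
  shows "(norm (a - t *\<^sub>R b))\<^sup>2 = (norm a)\<^sup>2 - 2 * t * inner a b + t\<^sup>2 * (norm b)\<^sup>2"
  unfolding power2_norm_eq_inner
  by (simp add: inner_diff_left inner_diff_right inner_commute algebra_simps power2_eq_square)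

lemma inner_quad:
  fixes v w :: "'c::real_inner"
  assumes c: "c > 0"
  shows "inner v w - c / 2 * (norm w)\<^sup>2 \<le> (norm v)\<^sup>2 / (2 * c)"
proof -
  have "0 \<le> (norm (v - c *\<^sub>R w))\<^sup>2" by simp
  also have "\<dots> = (norm v)\<^sup>2 - 2 * c * inner v w + c\<^sup>2 * (norm w)\<^sup>2" by (rule norm_diff_scale_sq)
  finally have "2 * c * (inner v w - c / 2 * (norm w)\<^sup>2) \<le> (norm v)\<^sup>2"
    by (simp add: algebra_simps power2_eq_square)
  thus ?thesis using c by (simp add: field_simps)
qed

lemma proj_exists:
  fixes S :: "'d::{real_inner, complete_space} set"
  assumes cl: "closed S" and cv: "convex S" and ne: "S \<noteq> {}"
  shows "\<exists>q\<in>S. \<forall>s\<in>S. inner (P - q) (s - q) \<le> 0"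
proof -
  have "\<exists>q\<in>S. \<forall>z\<in>S. inner 0 z - (norm (P - z))\<^sup>2 \<le> inner 0 q - (norm (P - q))\<^sup>2"
  proof (rule max_exists[where c = 2 and B = 0])
    fix x y assume xy: "x \<in> S" "y \<in> S"
    have "(1/2) *\<^sub>R (x + y) = (1/2) *\<^sub>R x + (1/2) *\<^sub>R y" by (simp add: scaleR_right_distrib)
    also have "\<dots> \<in> S" by (rule convexD[OF cv xy]) auto
    finally have m: "(1/2) *\<^sub>R (x + y) \<in> S" .
    have "(norm (P - (1/2) *\<^sub>R (x + y)))\<^sup>2 = ((norm (P - x))\<^sup>2 + (norm (P - y))\<^sup>2) / 2 - 2 / 8 * (norm (x - y))\<^sup>2"
      unfolding power2_norm_eq_inner
      by (simp add: inner_diff_left inner_diff_right inner_add_left inner_add_right inner_commute algebra_simps) (simp add: field_simps)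
    thus "(1/2) *\<^sub>R (x + y) \<in> S \<and> (norm (P - (1/2) *\<^sub>R (x + y)))\<^sup>2 \<le> ((norm (P - x))\<^sup>2 + (norm (P - y))\<^sup>2) / 2 - 2 / 8 * (norm (x - y))\<^sup>2"
      using m by simp
  next
    fix r
    have "{x \<in> S. (norm (P - x))\<^sup>2 \<le> r} = S \<inter> {x. (norm (P - x))\<^sup>2 \<le> r}" by auto
    also have "closed \<dots>" using cl by (intro closed_Int closed_Collect_le continuous_intros) auto
    finally show "closed {x \<in> S. (norm (P - x))\<^sup>2 \<le> r}" .
  qed (use ne in auto)
  then obtain q where qS: "q \<in> S" and qmin: "\<And>z. z \<in> S \<Longrightarrow> (norm (P - q))\<^sup>2 \<le> (norm (P - z))\<^sup>2"
    by auto
  show ?thesis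
  proof (intro bexI[OF _ qS] ballI)
    fix s assume sS: "s \<in> S"
    show "inner (P - q) (s - q) \<le> 0"
    proof (rule small_le0[where K = "(norm (s - q))\<^sup>2 / 2"])
      fix t :: real assume t: "0 < t" "t < 1"
      have "(1 - t) *\<^sub>R q + t *\<^sub>R s \<in> S" using cv qS sS t unfolding convex_def by auto
      moreover have "(1 - t) *\<^sub>R q + t *\<^sub>R s = q + t *\<^sub>R (s - q)" by (simp add: algebra_simps)
      ultimately have "(norm (P - q))\<^sup>2 \<le> (norm ((P - q) - t *\<^sub>R (s - q)))\<^sup>2"
        using qmin by (metis diff_diff_eq)
      also have "\<dots> = (norm (P - q))\<^sup>2 - 2 * t * inner (P - q) (s - q) + t\<^sup>2 * (norm (s - q))\<^sup>2"
        by (rule norm_diff_scale_sq)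
      finally have "2 * t * inner (P - q) (s - q) \<le> t * (t * (norm (s - q))\<^sup>2)"
        by (simp add: power2_eq_square algebra_simps)
      hence "2 * inner (P - q) (s - q) \<le> t * (norm (s - q))\<^sup>2" using t by (simp add: mult.assoc)
      thus "inner (P - q) (s - q) \<le> (norm (s - q))\<^sup>2 / 2 * t" by (simp add: field_simps)
    qed
  qed
qed

lemma sc_real:
  assumes sc: "strongly_convex_fun c h" and hx: "h x = ereal a" and hy: "h y = ereal b"
    and t: "0 < t" "t < 1"
  shows "h (t *\<^sub>R x + (1 - t) *\<^sub>R y) \<le> ereal (t * a + (1 - t) * b - c / 2 * t * (1 - t) * (norm (x - y))\<^sup>2)"
proof -
  have "h (t *\<^sub>R x + (1 - t) *\<^sub>R y) \<le> ereal t * h x + ereal (1 - t) * h y - ereal (c / 2 * t * (1 - t) * (norm (x - y))\<^sup>2)"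
    using sc t unfolding strongly_convex_fun_def by blast
  thus ?thesis by (simp add: hx hy)
qed

lemma conj_props:
  fixes h :: "'c::{real_inner, complete_space} \<Rightarrow> ereal"
  assumes pr: "proper_fun h" and ls: "lsc_fun h" and sc: "strongly_convex_fun c h" and c: "c > 0"
  shows "\<exists>X Cj. (\<forall>y. fconj h y = ereal (Cj y))
     \<and> (\<forall>y y'. Cj y + inner (y' - y) (X y) \<le> Cj y')
     \<and> (\<forall>y y'. Cj y' \<le> Cj y + inner (y' - y) (X y) + (norm (y' - y))\<^sup>2 / (2 * c))"
proof -
  define D where "D = edom h"
  define H where "H x = real_of_ereal (h x)" for x
  have ninf: "h x \<noteq> -\<infinity>" for x using pr by (simp add: proper_fun_def)
  have hD: "h x = ereal (H x)" if "x \<in> D" for x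
    using that ninf[of x] by (cases "h x") (auto simp: D_def edom_def H_def)
  have notD: "h x = \<infinity>" if "x \<notin> D" for x using that by (simp add: D_def edom_def)
  obtain x0 where x0: "x0 \<in> D" using pr by (auto simp: proper_fun_def D_def edom_def)
  have scD: "t *\<^sub>R x + (1 - t) *\<^sub>R y \<in> D \<and>
      H (t *\<^sub>R x + (1 - t) *\<^sub>R y) \<le> t * H x + (1 - t) * H y - c / 2 * t * (1 - t) * (norm (x - y))\<^sup>2"
    if "x \<in> D" "y \<in> D" "0 < t" "t < 1" for x y t
  proof -
    have le: "h (t *\<^sub>R x + (1 - t) *\<^sub>R y) \<le> ereal (t * H x + (1 - t) * H y - c / 2 * t * (1 - t) * (norm (x - y))\<^sup>2)"
      by (rule sc_real[OF sc hD[OF that(1)] hD[OF that(2)] that(3,4)])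
    hence inD: "t *\<^sub>R x + (1 - t) *\<^sub>R y \<in> D" by (auto simp: D_def edom_def)
    with le hD[OF inD] show ?thesis by simp
  qed
  have lsD: "closed {x \<in> D. H x \<le> r}" for r
  proof -
    have "{x \<in> D. H x \<le> r} = {x. h x \<le> ereal r}"
    proof (safe)
      fix x assume "x \<in> D" "H x \<le> r" thus "h x \<le> ereal r" using hD by simp
    next
      fix x assume a: "h x \<le> ereal r"
      show xD: "x \<in> D" using a by (auto simp: D_def edom_def)
      show "H x \<le> r" using a hD[OF xD] by simp
    qed
    thus ?thesis using ls by (simp add: lsc_fun_def)
  qed
  have mid: "(1/2) *\<^sub>R (x + y) \<in> D \<and> H ((1/2) *\<^sub>R (x + y)) \<le> (H x + H y) / 2 - c / 8 * (norm (x - y))\<^sup>2"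
    if "x \<in> D" "y \<in> D" for x y
  proof -
    have e: "(1/2) *\<^sub>R (x + y) = (1/2) *\<^sub>R x + (1 - 1/2) *\<^sub>R y" by (simp add: scaleR_right_distrib)
    show ?thesis using scD[OF that, of "1/2"] unfolding e by (simp add: field_simps)
  qed
  define E where "E = {(x, t::real). h x \<le> ereal t}"
  have Ecv: "convex E"
  proof (rule convexI)
    fix p1 p2 :: "'c \<times> real" and u v :: real
    assume p: "p1 \<in> E" "p2 \<in> E" and uv: "0 \<le> u" "0 \<le> v" "u + v = 1"
    obtain x1 s1 x2 s2 where pp: "p1 = (x1, s1)" "p2 = (x2, s2)" by fastforce
    have h1: "h x1 \<le> ereal s1" and h2: "h x2 \<le> ereal s2" using p pp by (auto simp: E_def)
    have x1D: "x1 \<in> D" and x2D: "x2 \<in> D" using h1 h2 by (auto simp: D_def edom_def)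
    have H1: "H x1 \<le> s1" and H2: "H x2 \<le> s2" using h1 h2 hD x1D x2D by auto
    show "u *\<^sub>R p1 + v *\<^sub>R p2 \<in> E"
    proof (cases "u = 0 \<or> v = 0")
      case True thus ?thesis using uv p by auto
    next
      case False
      hence u: "0 < u" "u < 1" using uv by auto
      have v: "v = 1 - u" using uv by simp
      have nn: "0 \<le> c / 2 * u * (1 - u) * (norm (x1 - x2))\<^sup>2" using c u by simp
      from scD[OF x1D x2D u] have
        "H (u *\<^sub>R x1 + v *\<^sub>R x2) \<le> u * H x1 + v * H x2" and inD: "u *\<^sub>R x1 + v *\<^sub>R x2 \<in> D"
        using nn unfolding v by linarith+
      moreover have "u * H x1 + v * H x2 \<le> u * s1 + v * s2"
        using H1 H2 uv by (intro add_mono mult_left_mono) auto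
      ultimately have "H (u *\<^sub>R x1 + v *\<^sub>R x2) \<le> u * s1 + v * s2" by linarith
      thus ?thesis using hD[OF inD] by (simp add: pp E_def)
    qed
  qed
  have Ecl: "closed E"
  proof (rule closed_sequential_limits[THEN iffD2], intro allI impI, elim conjE)
    fix seq :: "nat \<Rightarrow> 'c \<times> real" and l assume inE: "\<forall>n. seq n \<in> E" and lim: "seq \<longlonglongrightarrow> l"
    obtain x s where l: "l = (x, s)" by fastforce
    have l1: "(\<lambda>n. fst (seq n)) \<longlonglongrightarrow> x" and l2: "(\<lambda>n. snd (seq n)) \<longlonglongrightarrow> s"
      using tendsto_fst[OF lim] tendsto_snd[OF lim] by (auto simp: l)
    have "h x \<le> ereal (s + e)" if e: "e > 0" for e
    proof -
      have "eventually (\<lambda>n. snd (seq n) < s + e) sequentially"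
        using order_tendstoD(2)[OF l2, of "s + e"] e by simp
      hence "eventually (\<lambda>n. fst (seq n) \<in> {w. h w \<le> ereal (s + e)}) sequentially"
      proof eventually_elim
        case (elim n)
        have "h (fst (seq n)) \<le> ereal (snd (seq n))" using inE[rule_format, of n]
          by (cases "seq n") (auto simp: E_def)
        thus ?case using elim by (auto intro: order_trans)
      qed
      from Lim_in_closed_set[OF _ this _ l1] ls show ?thesis by (auto simp: lsc_fun_def)
    qed
    note hxle = this
    have "h x \<le> ereal (s + 1)" using hxle[of 1] by simp
    hence xD: "x \<in> D" by (auto simp: D_def edom_def)
    have "H x \<le> s + e" if "e > 0" for e using \<open>\<And>e. e > 0 \<Longrightarrow> h x \<le> ereal (s + e)\<close>[OF that] hD[OF xD] by simp
    hence "H x \<le> s" by (meson field_le_epsilon)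
    thus "l \<in> E" using hD[OF xD] by (simp add: l E_def)
  qed
  have "(x0, H x0) \<in> E" using hD[OF x0] by (simp add: E_def)
  hence Ene: "E \<noteq> {}" by blast
  obtain Q where QE: "Q \<in> E" and Qp: "\<And>e. e \<in> E \<Longrightarrow> inner ((x0, H x0 - 1) - Q) (e - Q) \<le> 0"
    using proj_exists[OF Ecl Ecv Ene, of "(x0, H x0 - 1)"] by blast
  obtain xq tq where Q: "Q = (xq, tq)" by fastforce
  define aa where "aa = x0 - xq"
  define bb where "bb = H x0 - 1 - tq"
  have ineq: "inner aa (x - xq) + bb * (s - tq) \<le> 0" if "(x, s) \<in> E" for x s
    using Qp[OF that] by (simp add: Q aa_def bb_def inner_real_def)
  have hq: "h xq \<le> ereal tq" using QE by (simp add: Q E_def)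
  hence xqD: "xq \<in> D" by (auto simp: D_def edom_def)
  have Hq: "H xq \<le> tq" using hq hD[OF xqD] by simp
  have "bb \<le> 0" using ineq[of xq "tq + 1"] hq by (simp add: E_def) (metis ereal_less_eq(3) less_add_one order.trans order_less_imp_le)
  moreover have "bb \<noteq> 0"
  proof
    assume b0: "bb = 0"
    have "inner aa aa \<le> 0" using ineq[of x0 "H x0"] hD[OF x0] b0 by (simp add: E_def aa_def)
    hence "aa = 0" by (metis inner_gt_zero_iff not_le)
    hence "x0 = xq" by (simp add: aa_def)
    with Hq b0 show False by (simp add: bb_def)
  qed
  ultimately have bneg: "bb < 0" by simp
  define a where "a = (- 1 / bb) *\<^sub>R aa"
  define \<alpha> where "\<alpha> = tq + inner aa xq / bb"
  have aff: "\<alpha> + inner a x \<le> H x" if xD: "x \<in> D" for x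
  proof -
    have "inner aa (x - xq) + bb * (H x - tq) \<le> 0" using ineq[of x "H x"] hD[OF xD] by (simp add: E_def)
    moreover have "bb * (\<alpha> + inner a x) = bb * tq + inner aa xq - inner aa x"
      using bneg by (simp add: \<alpha>_def a_def algebra_simps)
    ultimately have "bb * H x \<le> bb * (\<alpha> + inner a x)" by (simp add: inner_diff_right algebra_simps)
    thus ?thesis using bneg by (simp add: mult_le_cancel_left_neg)
  qed
  have bdd: "inner y z - H z \<le> inner (y - a) x0 + (norm (y - a))\<^sup>2 / c + H x0 - 2 * \<alpha> - inner a x0" if zD: "z \<in> D" for y z
  proof -
    have m: "(1/2) *\<^sub>R (z + x0) \<in> D" and mH: "H ((1/2) *\<^sub>R (z + x0)) \<le> (H z + H x0) / 2 - c / 8 * (norm (z - x0))\<^sup>2"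
      using mid[OF zD x0] by auto
    have "\<alpha> + inner a ((1/2) *\<^sub>R (z + x0)) \<le> H ((1/2) *\<^sub>R (z + x0))" by (rule aff[OF m])
    moreover have "inner a ((1/2) *\<^sub>R (z + x0)) = (inner a z + inner a x0) / 2" by (simp add: inner_add_right)
    ultimately have Hz: "2 * \<alpha> + inner a z + inner a x0 - H x0 + c / 4 * (norm (z - x0))\<^sup>2 \<le> H z"
      using mH by (simp add: field_simps)
    have q: "inner (y - a) (z - x0) - (c / 2) / 2 * (norm (z - x0))\<^sup>2 \<le> (norm (y - a))\<^sup>2 / (2 * (c / 2))"
      by (rule inner_quad) (use c in simp)
    have "inner y z - H z \<le> inner (y - a) z - c / 4 * (norm (z - x0))\<^sup>2 + H x0 - 2 * \<alpha> - inner a x0"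
      using Hz by (simp add: inner_diff_left)
    also have "inner (y - a) z = inner (y - a) x0 + inner (y - a) (z - x0)" by (simp add: inner_diff_right)
    finally show ?thesis using q by simp
  qed
  have "\<exists>x\<in>D. \<forall>z\<in>D. inner y z - H z \<le> inner y x - H x" for y
    using max_exists[OF _ c mid lsD bdd] x0 by blast
  then obtain X where XD: "\<And>y. X y \<in> D" and Xmax: "\<And>y z. z \<in> D \<Longrightarrow> inner y z - H z \<le> inner y (X y) - H (X y)"
    by metis
  define Cj where "Cj y = inner y (X y) - H (X y)" for y
  have QG: "inner y z - H z \<le> Cj y - c / 2 * (norm (z - X y))\<^sup>2" if zD: "z \<in> D" for y z
  proof -
    have "Cj y - (inner y z - H z) - c / 2 * (norm (z - X y))\<^sup>2 \<ge> 0"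
    proof -
      have "c / 2 * (norm (z - X y))\<^sup>2 - (Cj y - (inner y z - H z)) \<le> 0"
      proof (rule small_le0[where K = "c / 2 * (norm (z - X y))\<^sup>2"])
        fix t :: real assume t: "0 < t" "t < 1"
        from scD[OF zD XD t] have wD: "t *\<^sub>R z + (1 - t) *\<^sub>R X y \<in> D"
          and wH: "H (t *\<^sub>R z + (1 - t) *\<^sub>R X y) \<le> t * H z + (1 - t) * H (X y) - c / 2 * t * (1 - t) * (norm (z - X y))\<^sup>2"
          by auto
        have "inner y (t *\<^sub>R z + (1 - t) *\<^sub>R X y) - H (t *\<^sub>R z + (1 - t) *\<^sub>R X y) \<le> Cj y"
          using Xmax[OF wD] by (simp add: Cj_def)
        moreover have "inner y (t *\<^sub>R z + (1 - t) *\<^sub>R X y) = t * inner y z + (1 - t) * inner y (X y)"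
          by (simp add: inner_add_right)
        ultimately have "t * (inner y z - H z) + (1 - t) * Cj y + c / 2 * t * (1 - t) * (norm (z - X y))\<^sup>2 \<le> Cj y"
          using wH by (simp add: Cj_def algebra_simps)
        hence "t * (c / 2 * (1 - t) * (norm (z - X y))\<^sup>2) \<le> t * (Cj y - (inner y z - H z))"
          by (simp add: algebra_simps)
        hence "c / 2 * (1 - t) * (norm (z - X y))\<^sup>2 \<le> Cj y - (inner y z - H z)" using t by simp
        moreover have "c / 2 * (1 - t) * (norm (z - X y))\<^sup>2 = c / 2 * (norm (z - X y))\<^sup>2 - c / 2 * (norm (z - X y))\<^sup>2 * t"
          by (simp add: right_diff_distrib left_diff_distrib)
        ultimately show "c / 2 * (norm (z - X y))\<^sup>2 - (Cj y - (inner y z - H z)) \<le> c / 2 * (norm (z - X y))\<^sup>2 * t"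
          by linarith
      qed
      thus ?thesis by simp
    qed
    thus ?thesis by simp
  qed
  have conj: "fconj h y = ereal (Cj y)" for y
    unfolding fconj_def
  proof (rule antisym)
    show "(SUP x. ereal (inner y x) - h x) \<le> ereal (Cj y)"
    proof (rule SUP_least)
      fix x
      show "ereal (inner y x) - h x \<le> ereal (Cj y)"
      proof (cases "x \<in> D")
        case True thus ?thesis using Xmax[OF True, of y] hD[OF True] by (simp add: Cj_def)
      next
        case False thus ?thesis using notD[OF False] by simp
      qed
    qed
    show "ereal (Cj y) \<le> (SUP x. ereal (inner y x) - h x)"
      by (rule SUP_upper2[of "X y"]) (auto simp: hD[OF XD] Cj_def)
  qed
  have lo: "Cj y + inner (y' - y) (X y) \<le> Cj y'" for y y'
    using Xmax[OF XD, of y' y] by (simp add: Cj_def inner_diff_left)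
  have up: "Cj y' \<le> Cj y + inner (y' - y) (X y) + (norm (y' - y))\<^sup>2 / (2 * c)" for y y'
  proof -
    have g: "inner y (X y') - H (X y') \<le> Cj y - c / 2 * (norm (X y' - X y))\<^sup>2" by (rule QG[OF XD])
    have q: "inner (y' - y) (X y' - X y) - c / 2 * (norm (X y' - X y))\<^sup>2 \<le> (norm (y' - y))\<^sup>2 / (2 * c)"
      by (rule inner_quad[OF c])
    have "Cj y' = inner (y' - y) (X y) + inner (y' - y) (X y' - X y) + (inner y (X y') - H (X y'))"
      by (simp add: Cj_def inner_diff_left inner_diff_right)
    thus ?thesis using g q by linarith
  qed
  show ?thesis using conj lo up by blast
qed

lemma fgm_scalar:
  fixes Fx' Fx Fy Fu aa bb gg ab ag bg Q L \<kappa> :: real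
  assumes k: "\<kappa> > 0" and Q: "0 \<le> Q" "Q \<le> 1" and QL: "Q\<^sup>2 * L = \<kappa>"
    and i: "Fx' \<le> Fy - gg / (2 * L)" and ii: "Fy + Q * (bg - ag) \<le> Fx"
    and iii: "Fy - bg + \<kappa> / 2 * bb \<le> Fu" and nn: "0 \<le> aa + bb - 2 * ab"
  shows "Fx' - Fu + \<kappa> / 2 * ((1-Q)\<^sup>2*aa + Q\<^sup>2*bb + (Q/\<kappa>)\<^sup>2*gg + 2*(1-Q)*Q*ab - 2*(1-Q)*(Q/\<kappa>)*ag - 2*Q*(Q/\<kappa>)*bg)
     \<le> (1-Q) * (Fx - Fu + \<kappa> / 2 * aa)"
proof -
  have Q0: "Q \<noteq> 0" using QL k by auto
  have Leq: "L = \<kappa> / Q\<^sup>2" using QL Q0 by (simp add: field_simps)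
  have L: "gg / (2 * L) = \<kappa> / 2 * ((Q/\<kappa>)\<^sup>2*gg)"
    unfolding Leq using k Q0 by (simp add: field_simps power2_eq_square)
  define s1 where "s1 = Fy - gg / (2 * L) - Fx'"
  define s2 where "s2 = Fx - Fy - Q * (bg - ag)"
  define s3 where "s3 = Fu - Fy + bg - \<kappa> / 2 * bb"
  have s: "s1 \<ge> 0" "s2 \<ge> 0" "s3 \<ge> 0" using i ii iii by (auto simp: s1_def s2_def s3_def)
  have id: "(1-Q) * (Fx - Fu + \<kappa> / 2 * aa) - (Fx' - Fu + \<kappa> / 2 * ((1-Q)\<^sup>2*aa + Q\<^sup>2*bb + (Q/\<kappa>)\<^sup>2*gg + 2*(1-Q)*Q*ab - 2*(1-Q)*(Q/\<kappa>)*ag - 2*Q*(Q/\<kappa>)*bg))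
     = s1 + (1-Q) * s2 + Q * s3 + Q * (1-Q) * \<kappa> / 2 * (aa + bb - 2 * ab)"
    unfolding s1_def s2_def s3_def L using k by (simp add: field_simps power2_eq_square)
  have "0 \<le> s1 + (1-Q) * s2 + Q * s3 + Q * (1-Q) * \<kappa> / 2 * (aa + bb - 2 * ab)"
    using s Q k nn by (intro add_nonneg_nonneg mult_nonneg_nonneg) auto
  thus ?thesis using id by linarith
qed

lemma smooth_grad:
  fixes F :: "'b::real_inner \<Rightarrow> real"
  assumes lo: "\<And>p q. F p + inner (G p) (q - p) \<le> F q"
    and up: "\<And>p q. F q \<le> F p + inner (G p) (q - p) + M / 2 * (norm (q - p))\<^sup>2"
    and M: "M \<ge> 0"
  shows "(F has_derivative (\<lambda>h. inner (G p) h)) (at p)" and "grad F p = G p"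
proof -
  show der: "(F has_derivative (\<lambda>h. inner (G p) h)) (at p)"
    unfolding has_derivative_at_alt
  proof (intro conjI allI impI)
    show "bounded_linear (\<lambda>h. inner (G p) h)" by (rule bounded_linear_inner_right)
    fix e :: real assume e: "e > 0"
    show "\<exists>d>0. \<forall>y. norm (y - p) < d \<longrightarrow> norm (F y - F p - inner (G p) (y - p)) \<le> e * norm (y - p)"
    proof (intro exI[of _ "2 * e / (M + 1)"] conjI allI impI)
      show "0 < 2 * e / (M + 1)" using e M by simp
      fix y assume y: "norm (y - p) < 2 * e / (M + 1)"
      have a: "0 \<le> F y - F p - inner (G p) (y - p)" using lo[where p=p and q=y] by simp
      have b: "F y - F p - inner (G p) (y - p) \<le> M / 2 * (norm (y - p))\<^sup>2" using up[where p=p and q=y] by simp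
      have "M / 2 * (norm (y - p) * norm (y - p)) \<le> (M + 1) / 2 * (norm (y - p) * norm (y - p))"
        by (intro mult_right_mono) auto
      hence "M / 2 * (norm (y - p))\<^sup>2 \<le> (M + 1) / 2 * norm (y - p) * norm (y - p)"
        by (simp add: power2_eq_square mult.assoc)
      also have "\<dots> \<le> (M + 1) / 2 * (2 * e / (M + 1)) * norm (y - p)"
        using y M by (intro mult_right_mono mult_left_mono) auto
      also have "\<dots> = e * norm (y - p)" using M by simp
      finally show "norm (F y - F p - inner (G p) (y - p)) \<le> e * norm (y - p)" using a b by simp
    qed
  qed
  have ex: "\<exists>v. (F has_derivative (\<lambda>h. inner v h)) (at p)" using der by blast
  obtain v where v: "(F has_derivative (\<lambda>h. inner v h)) (at p)" and vdef: "grad F p = v"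
    using someI_ex[OF ex] unfolding grad_def by blast
  have "(\<lambda>h. inner v h) = (\<lambda>h. inner (G p) h)" by (rule has_derivative_unique[OF v der])
  hence "inner v (v - G p) = inner (G p) (v - G p)" by metis
  hence "inner (v - G p) (v - G p) = 0" by (simp add: inner_diff_left)
  thus "grad F p = G p" using vdef by simp
qed

lemma fgm_rate:
  fixes F :: "'b::real_inner \<Rightarrow> real" and G :: "'b \<Rightarrow> 'b"
  assumes k: "\<kappa> > 0" "\<kappa> \<le> L"
    and lo: "\<And>p q. F p + inner (G p) (q - p) + \<kappa> / 2 * (norm (q - p))\<^sup>2 \<le> F q"
    and up: "\<And>p q. F q \<le> F p + inner (G p) (q - p) + L / 2 * (norm (q - p))\<^sup>2"
  shows "F (fst (fgm G L \<kappa> k)) - F u \<le> (1 - sqrt (\<kappa> / L)) ^ k * (F 0 - F u + \<kappa> / 2 * (norm u)\<^sup>2)"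
proof -
  define Q where "Q = sqrt (\<kappa> / L)"
  have Lpos: "L > 0" using k by simp
  have Q0: "Q > 0" using k Lpos by (simp add: Q_def)
  have Q1: "Q \<le> 1" using k Lpos by (simp add: Q_def)
  have QL: "Q\<^sup>2 * L = \<kappa>" using k Lpos by (simp add: Q_def)
  have beta: "(sqrt L - sqrt \<kappa>) / (sqrt L + sqrt \<kappa>) = (1 - Q) / (1 + Q)"
  proof -
    have sL: "sqrt L > 0" using Lpos by simp
    have "Q = sqrt \<kappa> / sqrt L" by (simp add: Q_def real_sqrt_divide)
    hence sk: "sqrt \<kappa> = sqrt L * Q" using sL by (simp add: field_simps)
    have "(sqrt L - sqrt \<kappa>) / (sqrt L + sqrt \<kappa>) = (sqrt L * (1 - Q)) / (sqrt L * (1 + Q))"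
      by (simp add: sk algebra_simps)
    also have "\<dots> = (1 - Q) / (1 + Q)" using sL by simp
    finally show ?thesis .
  qed
  define x where "x k = fst (fgm G L \<kappa> k)" for k
  define w where "w k = snd (fgm G L \<kappa> k)" for k
  define v where "v k = (1 / Q) *\<^sub>R ((1 + Q) *\<^sub>R w k - x k)" for k
  define \<Phi> where "\<Phi> k = F (x k) - F u + \<kappa> / 2 * (norm (v k - u))\<^sup>2" for k
  have xs: "x (Suc k) = w k - (1 / L) *\<^sub>R G (w k)" for k by (simp add: x_def w_def Let_def)
  have ws: "w (Suc k) = x (Suc k) + ((1 - Q) / (1 + Q)) *\<^sub>R (x (Suc k) - x k)" for k
    by (simp add: x_def w_def Let_def beta)
  have step: "\<Phi> (Suc k) \<le> (1 - Q) * \<Phi> k" for k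
  proof -
    define y where "y = w k"
    define g where "g = G y"
    define a where "a = v k - u"
    define b where "b = y - u"
    have Qv: "Q *\<^sub>R v k = (1 + Q) *\<^sub>R y - x k" using Q0 by (simp add: v_def y_def)
    have xy: "x k - y = Q *\<^sub>R (b - a)"
    proof -
      have "Q *\<^sub>R (b - a) = Q *\<^sub>R y - Q *\<^sub>R v k" by (simp add: a_def b_def algebra_simps)
      also have "\<dots> = Q *\<^sub>R y - ((1 + Q) *\<^sub>R y - x k)" by (simp add: Qv)
      also have "\<dots> = x k - y" by (simp add: algebra_simps)
      finally show ?thesis by simp
    qed
    have x1: "x (Suc k) = y - (1 / L) *\<^sub>R g" by (simp add: xs y_def g_def)
    have "(1 + Q) *\<^sub>R w (Suc k) - x (Suc k) = x (Suc k) - (1 - Q) *\<^sub>R x k"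
    proof -
      have "(1 + Q) *\<^sub>R w (Suc k) = (1 + Q) *\<^sub>R x (Suc k) + ((1 + Q) * ((1 - Q) / (1 + Q))) *\<^sub>R (x (Suc k) - x k)"
        by (simp add: ws scaleR_add_right)
      also have "(1 + Q) * ((1 - Q) / (1 + Q)) = 1 - Q" using Q0 by simp
      finally show ?thesis by (simp add: algebra_simps)
    qed
    hence "Q *\<^sub>R v (Suc k) = x (Suc k) - (1 - Q) *\<^sub>R x k" using Q0 by (simp add: v_def)
    also have "\<dots> = y - (1 / L) *\<^sub>R g - (1 - Q) *\<^sub>R ((1 + Q) *\<^sub>R y - Q *\<^sub>R v k)"
      by (simp add: x1 Qv)
    also have "\<dots> = (1 - (1 - Q) * (1 + Q)) *\<^sub>R y - (1 / L) *\<^sub>R g + ((1 - Q) * Q) *\<^sub>R v k"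
      by (simp add: algebra_simps)
    also have "\<dots> = Q *\<^sub>R (Q *\<^sub>R y - (Q / \<kappa>) *\<^sub>R g + (1 - Q) *\<^sub>R v k)"
    proof -
      have c1: "1 - (1 - Q) * (1 + Q) = Q * Q" by (simp add: algebra_simps)
      have c2: "1 / L = Q * (Q / \<kappa>)" using QL k by (simp add: field_simps power2_eq_square)
      show ?thesis unfolding c1 c2 by (simp add: algebra_simps)
    qed
    finally have "v (Suc k) = Q *\<^sub>R y - (Q / \<kappa>) *\<^sub>R g + (1 - Q) *\<^sub>R v k" using Q0 by simp
    hence vs: "v (Suc k) - u = (1 - Q) *\<^sub>R a + Q *\<^sub>R b - (Q / \<kappa>) *\<^sub>R g"
      by (simp add: a_def b_def algebra_simps)
    have N: "(norm (v (Suc k) - u))\<^sup>2 = (1-Q)\<^sup>2*inner a a + Q\<^sup>2*inner b b + (Q/\<kappa>)\<^sup>2*inner g g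
        + 2*(1-Q)*Q*inner a b - 2*(1-Q)*(Q/\<kappa>)*inner a g - 2*Q*(Q/\<kappa>)*inner b g"
      unfolding vs power2_norm_eq_inner
      by (simp add: inner_add_left inner_add_right inner_diff_left inner_diff_right inner_commute[of b a]
          inner_commute[of g a] inner_commute[of g b] algebra_simps power2_eq_square)
    have nn: "0 \<le> inner a a + inner b b - 2 * inner a b"
    proof -
      have "0 \<le> inner (a - b) (a - b)" by simp
      thus ?thesis by (simp add: inner_diff_left inner_diff_right inner_commute[of b a])
    qed
    have i: "F (x (Suc k)) \<le> F y - inner g g / (2 * L)"
    proof -
      have "F (x (Suc k)) \<le> F y + inner g (x (Suc k) - y) + L / 2 * (norm (x (Suc k) - y))\<^sup>2"
        using up[where p=y and q="x (Suc k)"] by (simp add: g_def)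
      also have "x (Suc k) - y = - ((1 / L) *\<^sub>R g)" by (simp add: x1)
      finally have f: "F (x (Suc k)) \<le> F y + inner g (- ((1 / L) *\<^sub>R g)) + L / 2 * (norm (- ((1 / L) *\<^sub>R g)))\<^sup>2" .
      have e1: "inner g (- ((1 / L) *\<^sub>R g)) = - (inner g g / L)" by simp
      have e2: "L / 2 * (norm (- ((1 / L) *\<^sub>R g)))\<^sup>2 = inner g g / (2 * L)"
      proof -
        have "(norm (- ((1 / L) *\<^sub>R g)))\<^sup>2 = inner ((1 / L) *\<^sub>R g) ((1 / L) *\<^sub>R g)"
          by (simp only: norm_minus_cancel power2_norm_eq_inner)
        also have "\<dots> = (1 / L)\<^sup>2 * inner g g" by (simp add: power2_eq_square)
        finally have "(norm (- ((1 / L) *\<^sub>R g)))\<^sup>2 = (1 / L)\<^sup>2 * inner g g" .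
        thus ?thesis using Lpos by (simp add: power2_eq_square)
      qed
      have e3: "inner g g / L = 2 * (inner g g / (2 * L))" by simp
      show ?thesis using f unfolding e1 e2 using e3 by linarith
    qed
    have ii: "F y + Q * (inner b g - inner a g) \<le> F (x k)"
    proof -
      have "F y + inner g (x k - y) + \<kappa> / 2 * (norm (x k - y))\<^sup>2 \<le> F (x k)" using lo[where p=y and q="x k"] by (simp add: g_def)
      moreover have "0 \<le> \<kappa> / 2 * (norm (x k - y))\<^sup>2" using k by simp
      moreover have "inner g (x k - y) = Q * (inner b g - inner a g)"
        by (simp add: xy inner_diff_right inner_commute[of g a] inner_commute[of g b])
      ultimately show ?thesis by linarith
    qed
    have iii: "F y - inner b g + \<kappa> / 2 * inner b b \<le> F u"
    proof -
      have "F y + inner g (u - y) + \<kappa> / 2 * (norm (u - y))\<^sup>2 \<le> F u" using lo[where p=y and q=u] by (simp add: g_def)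
      moreover have "u - y = - b" by (simp add: b_def)
      ultimately show ?thesis by (simp add: power2_norm_eq_inner inner_commute[of g b])
    qed
    have "F (x (Suc k)) - F u + \<kappa> / 2 * ((1-Q)\<^sup>2*inner a a + Q\<^sup>2*inner b b + (Q/\<kappa>)\<^sup>2*inner g g
        + 2*(1-Q)*Q*inner a b - 2*(1-Q)*(Q/\<kappa>)*inner a g - 2*Q*(Q/\<kappa>)*inner b g)
      \<le> (1-Q) * (F (x k) - F u + \<kappa> / 2 * inner a a)"
      by (rule fgm_scalar[OF k(1) less_imp_le[OF Q0] Q1 QL i ii iii nn])
    thus ?thesis unfolding \<Phi>_def N by (simp add: a_def power2_norm_eq_inner)
  qed
  have x0: "x 0 = 0" and w0: "w 0 = 0" by (simp_all add: x_def w_def)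
  have \<Phi>0: "\<Phi> 0 = F 0 - F u + \<kappa> / 2 * (norm u)\<^sup>2" by (simp add: \<Phi>_def x0 v_def w0)
  have "\<Phi> k \<le> (1 - Q) ^ k * \<Phi> 0" for k
  proof (induction k)
    case 0 thus ?case by simp
  next
    case (Suc k)
    have "\<Phi> (Suc k) \<le> (1 - Q) * \<Phi> k" by (rule step)
    also have "\<dots> \<le> (1 - Q) * ((1 - Q) ^ k * \<Phi> 0)" using Suc Q1 by (intro mult_left_mono) auto
    finally show ?case by simp
  qed
  moreover have "F (x k) - F u \<le> \<Phi> k" using k by (simp add: \<Phi>_def)
  ultimately have "F (x k) - F u \<le> (1 - Q) ^ k * \<Phi> 0" by (meson order_trans)
  thus ?thesis by (simp add: \<Phi>0 Q_def x_def)
qed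

lemma descent:
  fixes F :: "'b::real_inner \<Rightarrow> real"
  assumes up: "\<And>p q. F q \<le> F p + inner (G p) (q - p) + M / 2 * (norm (q - p))\<^sup>2" and M: "M > 0"
  shows "F (y - (1 / M) *\<^sub>R G y) \<le> F y - (norm (G y))\<^sup>2 / (2 * M)"
proof -
  define g where "g = G y"
  have f: "F (y - (1 / M) *\<^sub>R g) \<le> F y + inner g (- ((1 / M) *\<^sub>R g)) + M / 2 * (norm (- ((1 / M) *\<^sub>R g)))\<^sup>2"
    using up[where p = y and q = "y - (1 / M) *\<^sub>R g"] by (simp add: g_def)
  have e1: "inner g (- ((1 / M) *\<^sub>R g)) = - (inner g g / M)" by simp
  have e2: "M / 2 * (norm (- ((1 / M) *\<^sub>R g)))\<^sup>2 = inner g g / (2 * M)"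
  proof -
    have "(norm (- ((1 / M) *\<^sub>R g)))\<^sup>2 = inner ((1 / M) *\<^sub>R g) ((1 / M) *\<^sub>R g)"
      by (simp only: norm_minus_cancel power2_norm_eq_inner)
    also have "\<dots> = (1 / M)\<^sup>2 * inner g g" by (simp add: power2_eq_square)
    finally have "(norm (- ((1 / M) *\<^sub>R g)))\<^sup>2 = (1 / M)\<^sup>2 * inner g g" .
    thus ?thesis using M by (simp add: power2_eq_square)
  qed
  have e3: "inner g g / M = 2 * (inner g g / (2 * M))" by simp
  have e4: "(norm g)\<^sup>2 = inner g g" by (simp add: power2_norm_eq_inner)
  show ?thesis using f unfolding e1 e2 g_def[symmetric] e4 using e3 by linarith
qed


theorem mainTheorem8:
  fixes f :: "'a::{real_inner, complete_space} \<Rightarrow> ereal"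
    and g :: "'b::euclidean_space \<Rightarrow> ereal"
    and A :: "'a \<Rightarrow> 'b" and Astar :: "'b \<Rightarrow> 'a"
    and \<rho> \<mu> R \<kappa> :: real and pstar :: 'b
    and \<theta> :: "'b \<Rightarrow> real" and L :: "real \<Rightarrow> real"
  assumes f_proper: "proper_fun f" and f_convex: "convex_fun f" and f_lsc: "lsc_fun f"
    and f_bdd: "bounded (edom f)"
    and g_proper: "proper_fun g" and g_lsc: "lsc_fun g"
    and \<mu>_pos: "\<mu> > 0" and g_sc: "strongly_convex_fun \<mu> g"
    and A_lin: "bounded_linear A"
    and adj: "\<And>p x. inner (Astar p) x = inner p (A x)"
    and dom_meet: "A ` edom f \<inter> edom g \<noteq> {}"
    and \<rho>_pos: "\<rho> > 0" and f_sc: "strongly_convex_fun \<rho> f"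
    and \<theta>_def: "\<And>p. ereal (\<theta> p) = fconj f (Astar p) + fconj g (- p)"
    and L_def: "\<And>c. L c = (onorm A)\<^sup>2 / \<rho> + 1 / \<mu> + c"
    and pstar_opt: "\<And>p. \<theta> pstar \<le> \<theta> p"
    and R_pos: "R > 0" and pstar_R: "norm pstar \<le> R"
    and \<kappa>_pos: "\<kappa> > 0"
  shows "\<forall>k. let pk = fst (fgm (grad (\<lambda>p. \<theta> p + \<kappa> / 2 * (norm p)\<^sup>2)) (L \<kappa>) \<kappa> k) in
      \<theta> pk - \<theta> pstar \<le> \<kappa> / 2 * R\<^sup>2
        + 25 / 8 * (\<theta> 0 - \<theta> pstar) * exp (- (real k / 2) * sqrt (\<kappa> / L \<kappa>))
    \<and> norm (grad \<theta> pk) \<le> 2 * sqrt (L \<kappa> * (\<theta> 0 - \<theta> pstar)) * exp (- (real k / 2) * sqrt (\<kappa> / L \<kappa>))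
        + 2 * \<kappa> * R"
proof -
  have Lk_def: "L \<kappa> = (onorm A)\<^sup>2 / \<rho> + 1 / \<mu> + \<kappa>" by (rule L_def)
  obtain Xf Cf where Cf: "\<And>y. fconj f y = ereal (Cf y)"
    and lof: "\<And>y y'. Cf y + inner (y' - y) (Xf y) \<le> Cf y'"
    and upf: "\<And>y y'. Cf y' \<le> Cf y + inner (y' - y) (Xf y) + (norm (y' - y))\<^sup>2 / (2 * \<rho>)"
    using conj_props[OF f_proper f_lsc f_sc \<rho>_pos] by blast
  obtain Xg Cg where Cg: "\<And>y. fconj g y = ereal (Cg y)"
    and log: "\<And>y y'. Cg y + inner (y' - y) (Xg y) \<le> Cg y'"
    and upg: "\<And>y y'. Cg y' \<le> Cg y + inner (y' - y) (Xg y) + (norm (y' - y))\<^sup>2 / (2 * \<mu>)"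
    using conj_props[OF g_proper g_lsc g_sc \<mu>_pos] by blast
  have th: "\<theta> p = Cf (Astar p) + Cg (- p)" for p using \<theta>_def[of p] by (simp add: Cf Cg)
  have Alin: "Astar q - Astar p = Astar (q - p)" for q p
  proof -
    have "inner (Astar q - Astar p - Astar (q - p)) x = 0" for x
      by (simp add: inner_diff_left adj)
    from this[of "Astar q - Astar p - Astar (q - p)"] show ?thesis by simp
  qed
  have Anorm: "(norm (Astar v))\<^sup>2 \<le> (onorm A)\<^sup>2 * (norm v)\<^sup>2" for v
  proof -
    have "norm (Astar v) \<le> onorm A * norm v"
    proof (cases "norm (Astar v) = 0")
      case True thus ?thesis using onorm_pos_le[OF A_lin] by simp
    next
      case False
      have "(norm (Astar v))\<^sup>2 = inner v (A (Astar v))" by (simp add: power2_norm_eq_inner adj)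
      also have "\<dots> \<le> norm v * norm (A (Astar v))" by (rule norm_cauchy_schwarz)
      also have "\<dots> \<le> norm v * (onorm A * norm (Astar v))" by (intro mult_left_mono onorm[OF A_lin]) auto
      finally have "norm (Astar v) * norm (Astar v) \<le> (onorm A * norm v) * norm (Astar v)"
        by (simp add: power2_eq_square algebra_simps)
      thus ?thesis using False by simp
    qed
    hence "(norm (Astar v))\<^sup>2 \<le> (onorm A * norm v)\<^sup>2" by (intro power_mono) auto
    thus ?thesis by (simp add: power_mult_distrib)
  qed
  define L0 where "L0 = (onorm A)\<^sup>2 / \<rho> + 1 / \<mu>"
  have L0pos: "L0 > 0" using \<rho>_pos \<mu>_pos by (simp add: L0_def add_nonneg_pos)
  have Lk: "L \<kappa> = L0 + \<kappa>" by (simp add: Lk_def L0_def)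
  define G where "G p = A (Xf (Astar p)) - Xg (- p)" for p
  have lo: "\<theta> p + inner (G p) (q - p) \<le> \<theta> q" for p q
  proof -
    have a: "Cf (Astar p) + inner (q - p) (A (Xf (Astar p))) \<le> Cf (Astar q)"
      using lof[where y="Astar p" and y'="Astar q"] by (simp add: Alin adj)
    have b: "Cg (- p) - inner (q - p) (Xg (- p)) \<le> Cg (- q)"
      using log[where y="- p" and y'="- q"] by (simp add: inner_diff_left)
    have "inner (G p) (q - p) = inner (q - p) (A (Xf (Astar p))) - inner (q - p) (Xg (- p))"
      by (simp add: G_def inner_diff_left inner_diff_right inner_commute)
    thus ?thesis using a b by (simp add: th)
  qed
  have up: "\<theta> q \<le> \<theta> p + inner (G p) (q - p) + L0 / 2 * (norm (q - p))\<^sup>2" for p q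
  proof -
    have a: "Cf (Astar q) \<le> Cf (Astar p) + inner (q - p) (A (Xf (Astar p))) + (norm (Astar (q - p)))\<^sup>2 / (2 * \<rho>)"
      using upf[where y="Astar p" and y'="Astar q"] by (simp add: Alin adj)
    have a2: "(norm (Astar (q - p)))\<^sup>2 / (2 * \<rho>) \<le> (onorm A)\<^sup>2 * (norm (q - p))\<^sup>2 / (2 * \<rho>)"
      using Anorm[of "q - p"] \<rho>_pos by (simp add: divide_right_mono)
    have b: "Cg (- q) \<le> Cg (- p) - inner (q - p) (Xg (- p)) + (norm (q - p))\<^sup>2 / (2 * \<mu>)"
      using upg[where y="- p" and y'="- q"] by (simp add: inner_diff_left norm_minus_commute)
    have eqG: "inner (G p) (q - p) = inner (q - p) (A (Xf (Astar p))) - inner (q - p) (Xg (- p))"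
      by (simp add: G_def inner_diff_left inner_diff_right inner_commute)
    have eqL: "L0 / 2 * (norm (q - p))\<^sup>2 = (onorm A)\<^sup>2 * (norm (q - p))\<^sup>2 / (2 * \<rho>) + (norm (q - p))\<^sup>2 / (2 * \<mu>)"
      by (simp add: L0_def field_simps)
    show ?thesis unfolding th using a a2 b eqG eqL by argo
  qed
  have gradth: "grad \<theta> p = G p" for p by (rule smooth_grad(2)[OF lo up less_imp_le[OF L0pos]])
  define F where "F p = \<theta> p + \<kappa> / 2 * (norm p)\<^sup>2" for p
  define Gk where "Gk p = G p + \<kappa> *\<^sub>R p" for p
  have sq: "(norm q)\<^sup>2 = (norm p)\<^sup>2 + 2 * inner p (q - p) + (norm (q - p))\<^sup>2" for p q :: 'b
    unfolding power2_norm_eq_inner by (simp add: inner_diff_left inner_diff_right inner_commute)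
  have loF: "F p + inner (Gk p) (q - p) + \<kappa> / 2 * (norm (q - p))\<^sup>2 \<le> F q" for p q
  proof -
    have e: "inner (Gk p) (q - p) = inner (G p) (q - p) + \<kappa> * inner p (q - p)" by (simp add: Gk_def inner_add_left)
    have sqk: "\<kappa> / 2 * (norm q)\<^sup>2 = \<kappa> / 2 * (norm p)\<^sup>2 + \<kappa> * inner p (q - p) + \<kappa> / 2 * (norm (q - p))\<^sup>2"
      using arg_cong[OF sq[of q p], of "\<lambda>t. \<kappa> / 2 * t"] by (simp add: algebra_simps)
    show ?thesis unfolding F_def using lo[of p q] e sqk by linarith
  qed
  have upF: "F q \<le> F p + inner (Gk p) (q - p) + L \<kappa> / 2 * (norm (q - p))\<^sup>2" for p q
  proof -
    have e: "inner (Gk p) (q - p) = inner (G p) (q - p) + \<kappa> * inner p (q - p)" by (simp add: Gk_def inner_add_left)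
    have sqk: "\<kappa> / 2 * (norm q)\<^sup>2 = \<kappa> / 2 * (norm p)\<^sup>2 + \<kappa> * inner p (q - p) + \<kappa> / 2 * (norm (q - p))\<^sup>2"
      using arg_cong[OF sq[of q p], of "\<lambda>t. \<kappa> / 2 * t"] by (simp add: algebra_simps)
    have l: "L \<kappa> / 2 * (norm (q - p))\<^sup>2 = L0 / 2 * (norm (q - p))\<^sup>2 + \<kappa> / 2 * (norm (q - p))\<^sup>2"
      by (simp add: Lk algebra_simps)
    show ?thesis unfolding F_def using up[of q p] e sqk l by linarith
  qed
  have loF': "F p + inner (Gk p) (q - p) \<le> F q" for p q
  proof -
    have "0 \<le> \<kappa> / 2 * (norm (q - p))\<^sup>2" using \<kappa>_pos by simp
    thus ?thesis using loF[of p q] by linarith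
  qed
  have Lkpos: "L \<kappa> > 0" using L0pos \<kappa>_pos Lk by simp
  have gradF: "grad F = Gk" by (rule ext, rule smooth_grad(2)[OF loF' upF less_imp_le[OF Lkpos]])
  have Fd: "(F has_derivative (\<lambda>h. inner (Gk p) h)) (at p)" for p
    by (rule smooth_grad(1)[OF loF' upF less_imp_le[OF Lkpos]])
  have gradF': "grad (\<lambda>p. \<theta> p + \<kappa> / 2 * (norm p)\<^sup>2) = Gk" using gradF by (simp add: F_def[abs_def])
  define D where "D = \<theta> 0 - \<theta> pstar"
  have D0: "D \<ge> 0" using pstar_opt[of 0] by (simp add: D_def)
  have Fge: "F p \<ge> \<theta> pstar + \<kappa> / 2 * (norm p)\<^sup>2" for p using pstar_opt[of p] by (simp add: F_def)
  define r where "r = sqrt (2 * D / \<kappa>) + 1"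
  have cont: "continuous_on (cball 0 r) F"
    using Fd by (meson has_derivative_continuous continuous_at_imp_continuous_on)
  have "sqrt (2 * D / \<kappa>) \<ge> 0" using D0 \<kappa>_pos by simp
  hence "r \<ge> 0" by (simp add: r_def)
  then obtain y where yB: "y \<in> cball 0 r" and ymin0: "\<And>z. z \<in> cball 0 r \<Longrightarrow> F y \<le> F z"
    using continuous_attains_inf[OF compact_cball _ cont] by fastforce
  have ymin: "F y \<le> F z" for z
  proof (cases "z \<in> cball 0 r")
    case True thus ?thesis by (rule ymin0)
  next
    case False
    hence zr: "norm z > r" by simp
    have s0: "sqrt (2 * D / \<kappa>) \<ge> 0" using D0 \<kappa>_pos by simp
    have "(sqrt (2 * D / \<kappa>))\<^sup>2 = 2 * D / \<kappa>" using D0 \<kappa>_pos by simp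
    moreover have "(sqrt (2 * D / \<kappa>))\<^sup>2 \<le> (norm z)\<^sup>2" using zr s0 by (intro power_mono) (auto simp: r_def)
    ultimately have "2 * D / \<kappa> \<le> (norm z)\<^sup>2" by simp
    hence "D \<le> \<kappa> / 2 * (norm z)\<^sup>2" using \<kappa>_pos by (simp add: field_simps)
    hence "F 0 \<le> F z" using Fge[of z] by (simp add: F_def D_def)
    thus ?thesis using ymin0[of 0] \<open>r \<ge> 0\<close> by simp
  qed
  have Gky: "Gk y = 0"
  proof -
    have "F (y - (1 / L \<kappa>) *\<^sub>R Gk y) \<le> F y - (norm (Gk y))\<^sup>2 / (2 * L \<kappa>)" by (rule descent[OF upF Lkpos])
    with ymin[of "y - (1 / L \<kappa>) *\<^sub>R Gk y"] have "(norm (Gk y))\<^sup>2 / (2 * L \<kappa>) \<le> 0" by simp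
    hence "(norm (Gk y))\<^sup>2 \<le> 0" using Lkpos by (simp add: divide_le_0_iff)
    thus ?thesis by simp
  qed
  have Gy: "G y = - (\<kappa> *\<^sub>R y)" using Gky by (simp add: Gk_def eq_neg_iff_add_eq_0)
  have ynorm: "norm y \<le> R"
  proof -
    have "\<theta> y + \<kappa> / 2 * (norm y)\<^sup>2 \<le> \<theta> pstar + \<kappa> / 2 * (norm pstar)\<^sup>2" using ymin[of pstar] by (simp add: F_def)
    with pstar_opt[of y] have "\<kappa> / 2 * (norm y)\<^sup>2 \<le> \<kappa> / 2 * (norm pstar)\<^sup>2" by linarith
    hence "(norm y)\<^sup>2 \<le> (norm pstar)\<^sup>2" using \<kappa>_pos by simp
    hence "norm y \<le> norm pstar" by (simp add: power2_le_iff_abs_le)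
    thus ?thesis using pstar_R by simp
  qed
  have coco: "(norm (G x - G z))\<^sup>2 \<le> 2 * L0 * (\<theta> x - \<theta> z - inner (G z) (x - z))" for x z
  proof -
    define \<phi> where "\<phi> w = \<theta> w - inner (G z) w" for w
    define G\<phi> where "G\<phi> w = G w - G z" for w
    have up\<phi>: "\<phi> q \<le> \<phi> p + inner (G\<phi> p) (q - p) + L0 / 2 * (norm (q - p))\<^sup>2" for p q
      using up[of q p] by (simp add: \<phi>_def G\<phi>_def inner_diff_left inner_diff_right)
    have "\<phi> (x - (1 / L0) *\<^sub>R G\<phi> x) \<le> \<phi> x - (norm (G\<phi> x))\<^sup>2 / (2 * L0)" by (rule descent[OF up\<phi> L0pos])
    moreover have "\<phi> z \<le> \<phi> w" for w using lo[of z w] by (simp add: \<phi>_def inner_diff_right)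
    ultimately have "(norm (G\<phi> x))\<^sup>2 / (2 * L0) \<le> \<phi> x - \<phi> z"
      by (metis add.commute le_diff_eq order_trans)
    hence "(norm (G\<phi> x))\<^sup>2 \<le> 2 * L0 * (\<phi> x - \<phi> z)" using L0pos by (simp add: field_simps)
    moreover have "\<phi> x - \<phi> z = \<theta> x - \<theta> z - inner (G z) (x - z)" by (simp add: \<phi>_def inner_diff_right)
    ultimately show ?thesis by (simp add: G\<phi>_def)
  qed
  define q where "q = sqrt (\<kappa> / L \<kappa>)"
  have kL: "\<kappa> \<le> L \<kappa>" using Lk L0pos by simp
  have q0: "0 \<le> q" and q1: "q \<le> 1" using kL \<kappa>_pos Lkpos by (auto simp: q_def)
  have F0: "F 0 = \<theta> 0" by (simp add: F_def)
  show ?thesis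
  proof (intro allI)
    fix k :: nat
    define pk where "pk = fst (fgm Gk (L \<kappa>) \<kappa> k)"
    define E where "E = exp (- (real k / 2) * q)"
    have E0: "0 \<le> E" and E1: "E \<le> 1" using q0 by (auto simp: E_def)
    have powE: "(1 - q) ^ k \<le> E\<^sup>2"
    proof -
      have "(1 - q) ^ k \<le> exp (- q) ^ k"
        using q1 exp_ge_add_one_self[of "- q"] by (intro power_mono) auto
      also have "\<dots> = E\<^sup>2" by (simp add: E_def exp_of_nat_mult[symmetric] power2_eq_square exp_add[symmetric] field_simps)
      finally show ?thesis .
    qed
    have pw0: "0 \<le> (1 - q) ^ k" using q1 by simp
    have r1: "F pk - F pstar \<le> (1 - q) ^ k * (F 0 - F pstar + \<kappa> / 2 * (norm pstar)\<^sup>2)"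
      unfolding pk_def q_def by (rule fgm_rate[OF \<kappa>_pos kL loF upF])
    hence r1': "F pk - F pstar \<le> (1 - q) ^ k * D" by (simp add: F_def D_def)
    have r2: "F pk - F y \<le> (1 - q) ^ k * (F 0 - F y + \<kappa> / 2 * (norm y)\<^sup>2)"
      unfolding pk_def q_def by (rule fgm_rate[OF \<kappa>_pos kL loF upF])
    have "F 0 - F y + \<kappa> / 2 * (norm y)\<^sup>2 \<le> D" using pstar_opt[of y] by (simp add: F_def D_def)
    hence r2': "F pk - F y \<le> (1 - q) ^ k * D" using r2 pw0 by (meson mult_left_mono order_trans)
    have DE: "(1 - q) ^ k * D \<le> E\<^sup>2 * D" using powE D0 by (rule mult_right_mono)
    have E2E: "E\<^sup>2 \<le> E" using mult_left_le_one_le[OF E0 E0 E1] by (simp add: power2_eq_square)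
    have pR: "(norm pstar)\<^sup>2 \<le> R\<^sup>2" using pstar_R by (intro power_mono) auto
    have part1: "\<theta> pk - \<theta> pstar \<le> \<kappa> / 2 * R\<^sup>2 + 25 / 8 * (\<theta> 0 - \<theta> pstar) * E"
    proof -
      have "\<theta> pk \<le> F pk" using \<kappa>_pos by (simp add: F_def)
      hence "\<theta> pk - \<theta> pstar \<le> (1 - q) ^ k * D + \<kappa> / 2 * (norm pstar)\<^sup>2"
        using r1' unfolding F_def by linarith
      moreover have "\<kappa> / 2 * (norm pstar)\<^sup>2 \<le> \<kappa> / 2 * R\<^sup>2" using pR \<kappa>_pos by simp
      moreover have "E\<^sup>2 * D \<le> 25 / 8 * D * E"
      proof -
        have "E\<^sup>2 * D \<le> E * D" by (rule mult_right_mono[OF E2E D0])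
        moreover have "0 \<le> D * E" using D0 E0 by simp
        moreover have "E * D = D * E" by simp
        ultimately show ?thesis by linarith
      qed
      ultimately have "\<theta> pk - \<theta> pstar \<le> \<kappa> / 2 * R\<^sup>2 + 25 / 8 * D * E" using DE by linarith
      thus ?thesis by (simp add: D_def)
    qed
    have part2: "norm (grad \<theta> pk) \<le> 2 * sqrt (L \<kappa> * (\<theta> 0 - \<theta> pstar)) * E + 2 * \<kappa> * R"
    proof -
      have c1: "(norm (G pk - G y))\<^sup>2 \<le> 2 * L0 * (\<theta> pk - \<theta> y - inner (G y) (pk - y))" by (rule coco)
      have "\<theta> pk - \<theta> y - inner (G y) (pk - y) \<le> F pk - F y"
      proof -
        have "\<kappa> / 2 * (norm pk)\<^sup>2 - \<kappa> / 2 * (norm y)\<^sup>2 - \<kappa> * inner y (pk - y) = \<kappa> / 2 * (norm (pk - y))\<^sup>2"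
          using arg_cong[OF sq[of pk y], of "\<lambda>t. \<kappa> / 2 * t"] by (simp add: algebra_simps)
        moreover have "0 \<le> \<kappa> / 2 * (norm (pk - y))\<^sup>2" using \<kappa>_pos by simp
        ultimately show ?thesis by (simp add: F_def Gy)
      qed
      hence "\<theta> pk - \<theta> y - inner (G y) (pk - y) \<le> (1 - q) ^ k * D" using r2' by linarith
      hence "2 * L0 * (\<theta> pk - \<theta> y - inner (G y) (pk - y)) \<le> 2 * L0 * ((1 - q) ^ k * D)"
        using L0pos by (intro mult_left_mono) auto
      hence "(norm (G pk - G y))\<^sup>2 \<le> 2 * L0 * ((1 - q) ^ k * D)" using c1 by linarith
      also have "\<dots> \<le> 2 * L \<kappa> * (E\<^sup>2 * D)"
        using DE L0pos Lk \<kappa>_pos D0 E0 pw0 by (intro mult_mono[of "2 * L0"]) auto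
      also have "\<dots> = (sqrt 2 * sqrt (L \<kappa> * D) * E)\<^sup>2"
      proof -
        have "(sqrt 2 * sqrt (L \<kappa> * D) * E)\<^sup>2 = (sqrt 2)\<^sup>2 * (sqrt (L \<kappa> * D))\<^sup>2 * E\<^sup>2"
          by (simp only: power_mult_distrib)
        also have "\<dots> = 2 * (L \<kappa> * D) * E\<^sup>2" using Lkpos D0 by simp
        finally show ?thesis by simp
      qed
      finally have "norm (G pk - G y) \<le> sqrt 2 * sqrt (L \<kappa> * D) * E"
        using E0 Lkpos D0 by (intro power2_le_imp_le[of "norm (G pk - G y)"]) auto
      also have "\<dots> \<le> 2 * sqrt (L \<kappa> * D) * E"
      proof -
        have s2: "sqrt 2 \<le> 2" by (rule real_le_lsqrt) auto
        have "0 \<le> sqrt (L \<kappa> * D) * E" using E0 Lkpos D0 by simp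
        hence "sqrt 2 * (sqrt (L \<kappa> * D) * E) \<le> 2 * (sqrt (L \<kappa> * D) * E)" by (rule mult_right_mono[OF s2])
        thus ?thesis by (simp add: mult.assoc)
      qed
      finally have n1: "norm (G pk - G y) \<le> 2 * sqrt (L \<kappa> * D) * E" .
      have n2: "norm (G y) \<le> \<kappa> * R" using ynorm \<kappa>_pos by (simp add: Gy)
      have "norm (G pk) \<le> norm (G pk - G y) + norm (G y)" using norm_triangle_sub[of "G pk" "G y"] by simp
      moreover have "0 \<le> \<kappa> * R" using \<kappa>_pos R_pos by simp
      ultimately have "norm (G pk) \<le> 2 * sqrt (L \<kappa> * D) * E + 2 * \<kappa> * R" using n1 n2 by linarith
      thus ?thesis by (simp add: gradth D_def)
    qed
    show "let pk = fst (fgm (grad (\<lambda>p. \<theta> p + \<kappa> / 2 * (norm p)\<^sup>2)) (L \<kappa>) \<kappa> k) in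
      \<theta> pk - \<theta> pstar \<le> \<kappa> / 2 * R\<^sup>2
        + 25 / 8 * (\<theta> 0 - \<theta> pstar) * exp (- (real k / 2) * sqrt (\<kappa> / L \<kappa>))
    \<and> norm (grad \<theta> pk) \<le> 2 * sqrt (L \<kappa> * (\<theta> 0 - \<theta> pstar)) * exp (- (real k / 2) * sqrt (\<kappa> / L \<kappa>))
        + 2 * \<kappa> * R"
      using part1 part2 unfolding gradF' Let_def pk_def[symmetric] E_def q_def by simp
  qed
qed

end
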